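(* Let $F$ be a field of characteristic not 2 or 3 and $E$ an étale cubic $F$-algebra. Let $v_{0,E}=(1,0,0,-1)\in V_E(F)$. Then \[\mathrm{Stab}_{M_E}(v_{0,E})=\Big\{\begin{pmatrix}\alpha&0\\0&\alpha^{-1}\end{pmatrix}:\alpha\in E^1\Big\}\rtimes\{1,w\}\cong E^1\rtimes\mathbb Z/2\mathbb Z,\qquad w=\begin{pmatrix}0&1\\1&0\end{pmatrix},\] and $\mathrm{Stab}_{\tilde M_E}(v_{0,E})=E^1\rtimes(\mathbb Z/2\mathbb Z\times S_E)$. As subgroups of $GL_2(E)^0\rtimes S_E(F)$ (under the fixed isomorphism $M_E(F)\cong GL_2(E)^0$), this stabilizer equals the group of $F$-automorphisms $\mathrm{Aut}_F(E,C_E,Q,\beta)$ of the twisted composition algebra $C_E=E\oplus E$, $Q(x,y)=xy$, $\beta(x,y)=(y^\#,x^\#)$.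
   Context: $E^1=\{\alpha\in E:N_E(\alpha)=1\}$; $x^\#$ is the adjoint with $xx^\#=N_E(x)$. $GL_2(E)^0=\{g\in GL_2(E):\det g\in F^\times\}$; $S_E(F)=\mathrm{Aut}_F(E)$. $\tilde M_E(F)=GL_2(E)^0\rtimes S_E(F)$ acts on $V_E(F)=F\oplus E\oplus E\oplus F$ (cubes $(a,e,f,b)$) as follows: $\sigma\in S_E(F)$ acts by $(a,e,f,b)\mapsto(a,\sigma e,\sigma f,b)$; $\mathrm{diag}(\alpha,\beta)$ with $\alpha\beta\in F^\times$ acts by $(a,e,f,b)\mapsto(\alpha^\#\beta^{-1}a,\alpha^\#\alpha^{-1}e,\beta^\#\beta^{-1}f,\beta^\#\alpha^{-1}b)$; $w$ acts by $(a,e,f,b)\mapsto(-b,-f,-e,-a)$; the full action is the $F$-form (via Galois descent along $E\otimes\bar F\cong\bar F^3$) of the split action of $(GL_2^3)^0$ on $F^2\otimes F^2\otimes F^2$ by $d^{-1}g_1\otimes g_2\otimes g_3$ ($d$ the common determinant), with $a,b$ the coefficients of $u_1^{\otimes3},u_2^{\otimes3}$, $e_i$ (resp. $f_i$) the coefficient of the basis vector with $u_2$ (resp. $u_1$) in the $i$-th factor and $u_1$ (resp. $u_2$) elsewhere. An $F$-automorphism of $C_E$ is a pair $(\phi,\sigma)$, $\sigma\in\mathrm{Aut}_F(E)$, $\phi$ $F$-linear bijective with $\phi(av)=\sigma(a)\phi(v)$, $\sigma\circ Q=Q\circ\phi$, $\phi\circ\beta=\beta\circ\phi$; it is viewed in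 $GL_2(E)\rtimes S_E(F)$ by writing $\phi$ as an $E$-linear map composed with $\sigma$ acting coordinatewise on $E^2$. *)

theory Defs
  imports Main
begin

text \<open>Setting: F is a field (type 'f), E a commutative ring (type 'e), and
\<iota> :: 'f \<Rightarrow> 'e the structure map making E an F-algebra.
Scalar multiplication c . x is \<iota> c * x.\<close>

definition basis3 :: "('f::field \<Rightarrow> 'e::comm_ring_1) \<Rightarrow> 'e \<times> 'e \<times> 'e \<Rightarrow> bool" where
  "basis3 \<iota> B \<longleftrightarrow> (case B of (b0, b1, b2) \<Rightarrow>
     (\<forall>x. \<exists>!c::'f \<times> 'f \<times> 'f.
        x = \<iota> (fst c) * b0 + \<iota> (fst (snd c)) * b1 + \<iota> (snd (snd c)) * b2))"

definition cubic_alg :: "('f::field \<Rightarrow> 'e::comm_ring_1) \<Rightarrow> bool" where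
  "cubic_alg \<iota> \<longleftrightarrow> inj \<iota> \<and> \<iota> 1 = 1 \<and>
     (\<forall>c d. \<iota> (c + d) = \<iota> c + \<iota> d) \<and> (\<forall>c d. \<iota> (c * d) = \<iota> c * \<iota> d) \<and>
     (\<exists>B. basis3 \<iota> B)"

definition theB :: "('f::field \<Rightarrow> 'e::comm_ring_1) \<Rightarrow> 'e \<times> 'e \<times> 'e" where
  "theB \<iota> = (SOME B. basis3 \<iota> B)"

definition bvec :: "('f::field \<Rightarrow> 'e::comm_ring_1) \<Rightarrow> nat \<Rightarrow> 'e" where
  "bvec \<iota> j = (case theB \<iota> of (b0, b1, b2) \<Rightarrow> (if j = 0 then b0 else if j = 1 then b1 else b2))"

definition coord :: "('f::field \<Rightarrow> 'e::comm_ring_1) \<Rightarrow> 'e \<Rightarrow> nat \<Rightarrow> 'f" where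
  "coord \<iota> x i = (let c = (THE c::'f \<times> 'f \<times> 'f.
        x = \<iota> (fst c) * bvec \<iota> 0 + \<iota> (fst (snd c)) * bvec \<iota> 1 + \<iota> (snd (snd c)) * bvec \<iota> 2)
     in if i = 0 then fst c else if i = 1 then fst (snd c) else snd (snd c))"

definition mm :: "('f::field \<Rightarrow> 'e::comm_ring_1) \<Rightarrow> 'e \<Rightarrow> nat \<Rightarrow> nat \<Rightarrow> 'f" where
  "mm \<iota> x i j = coord \<iota> (x * bvec \<iota> j) i"

text \<open>Norm, trace and second coefficient of the characteristic polynomial
  t^3 - T(x) t^2 + S(x) t - N(x) of multiplication by x.\<close>
definition nrm :: "('f::field \<Rightarrow> 'e::comm_ring_1) \<Rightarrow> 'e \<Rightarrow> 'f" where
  "nrm \<iota> x = (let m = mm \<iota> x in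
      m 0 0 * (m 1 1 * m 2 2 - m 1 2 * m 2 1)
    - m 0 1 * (m 1 0 * m 2 2 - m 1 2 * m 2 0)
    + m 0 2 * (m 1 0 * m 2 1 - m 1 1 * m 2 0))"

definition trc :: "('f::field \<Rightarrow> 'e::comm_ring_1) \<Rightarrow> 'e \<Rightarrow> 'f" where
  "trc \<iota> x = (let m = mm \<iota> x in m 0 0 + m 1 1 + m 2 2)"

definition sq2 :: "('f::field \<Rightarrow> 'e::comm_ring_1) \<Rightarrow> 'e \<Rightarrow> 'f" where
  "sq2 \<iota> x = (let m = mm \<iota> x in
      (m 0 0 * m 1 1 - m 0 1 * m 1 0) + (m 0 0 * m 2 2 - m 0 2 * m 2 0)
    + (m 1 1 * m 2 2 - m 1 2 * m 2 1))"

text \<open>adjoint x^# = x^2 - T(x) x + S(x), so that x * x^# = N(x)\<close>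
definition adj :: "('f::field \<Rightarrow> 'e::comm_ring_1) \<Rightarrow> 'e \<Rightarrow> 'e" where
  "adj \<iota> x = x * x - \<iota> (trc \<iota> x) * x + \<iota> (sq2 \<iota> x)"

definition cr :: "('f::field \<Rightarrow> 'e::comm_ring_1) \<Rightarrow> 'e \<Rightarrow> 'e \<Rightarrow> 'e" where
  "cr \<iota> x y = adj \<iota> (x + y) - adj \<iota> x - adj \<iota> y"

definition etale_cubic :: "('f::field \<Rightarrow> 'e::comm_ring_1) \<Rightarrow> bool" where
  "etale_cubic \<iota> \<longleftrightarrow> cubic_alg \<iota> \<and> (\<forall>x. (\<forall>y. trc \<iota> (x * y) = 0) \<longrightarrow> x = 0)"

definition E1 :: "('f::field \<Rightarrow> 'e::comm_ring_1) \<Rightarrow> 'e set" where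
  "E1 \<iota> = {\<alpha>. nrm \<iota> \<alpha> = 1}"

definition autE :: "('f::field \<Rightarrow> 'e::comm_ring_1) \<Rightarrow> ('e \<Rightarrow> 'e) set" where
  "autE \<iota> = {\<sigma>. bij \<sigma> \<and> (\<forall>x y. \<sigma> (x + y) = \<sigma> x + \<sigma> y) \<and> (\<forall>x y. \<sigma> (x * y) = \<sigma> x * \<sigma> y)
              \<and> (\<forall>c. \<sigma> (\<iota> c) = \<iota> c)}"

text \<open>2x2 matrices over E: (p,q,r,s) stands for [[p,q],[r,s]]\<close>
type_synonym 'e mat2 = "'e \<times> 'e \<times> 'e \<times> 'e"

definition det2 :: "'e::comm_ring_1 mat2 \<Rightarrow> 'e" where
  "det2 g = (case g of (p, q, r, s) \<Rightarrow> p * s - q * r)"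

definition mmul2 :: "'e::comm_ring_1 mat2 \<Rightarrow> 'e mat2 \<Rightarrow> 'e mat2" where
  "mmul2 g h = (case g of (p, q, r, s) \<Rightarrow> case h of (p', q', r', s') \<Rightarrow>
      (p * p' + q * r', p * q' + q * s', r * p' + s * r', r * q' + s * s'))"

definition mvec2 :: "'e::comm_ring_1 mat2 \<Rightarrow> 'e \<times> 'e \<Rightarrow> 'e \<times> 'e" where
  "mvec2 g v = (case g of (p, q, r, s) \<Rightarrow> case v of (x, y) \<Rightarrow> (p * x + q * y, r * x + s * y))"

definition wmat :: "'e::comm_ring_1 mat2" where
  "wmat = (0, 1, 1, 0)"

definition GL2 :: "'e::comm_ring_1 mat2 set" where
  "GL2 = {g. \<exists>u. det2 g * u = 1}"

definition GL20 :: "('f::field \<Rightarrow> 'e::comm_ring_1) \<Rightarrow> 'e mat2 set" where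
  "GL20 \<iota> = {g. \<exists>d. d \<noteq> 0 \<and> det2 g = \<iota> d}"

definition detF :: "('f::field \<Rightarrow> 'e::comm_ring_1) \<Rightarrow> 'e mat2 \<Rightarrow> 'f" where
  "detF \<iota> g = (THE d. det2 g = \<iota> d)"

type_synonym ('f, 'e) cube = "'f \<times> 'e \<times> 'e \<times> 'f"

text \<open>Action of g = [[p,q],[r,s]] in GL_2(E)^0 on V_E(F): the F-form of
  d^{-1} g_1 \<otimes> g_2 \<otimes> g_3, written out in terms of N, Tr, # and \<times>.\<close>
definition act :: "('f::field \<Rightarrow> 'e::comm_ring_1) \<Rightarrow> 'e mat2 \<Rightarrow> ('f, 'e) cube \<Rightarrow> ('f, 'e) cube" where
  "act \<iota> g v = (case g of (p, q, r, s) \<Rightarrow> case v of (a, e, f, b) \<Rightarrow>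
     (let d = inverse (detF \<iota> g) in
      ( d * (nrm \<iota> p * a + trc \<iota> (adj \<iota> p * q * e) + trc \<iota> (p * adj \<iota> q * f) + nrm \<iota> q * b),
        \<iota> d * (\<iota> a * r * adj \<iota> p + s * adj \<iota> p * e + r * cr \<iota> (q * e) p
               + r * adj \<iota> q * f + s * cr \<iota> (p * f) q + \<iota> b * s * adj \<iota> q),
        \<iota> d * (\<iota> a * p * adj \<iota> r + q * adj \<iota> r * e + p * cr \<iota> (s * e) r
               + p * adj \<iota> s * f + q * cr \<iota> (r * f) s + \<iota> b * q * adj \<iota> s),
        d * (nrm \<iota> r * a + trc \<iota> (adj \<iota> r * s * e) + trc \<iota> (r * adj \<iota> s * f) + nrm \<iota> s * b))))"

definition sact :: "('e \<Rightarrow> 'e) \<Rightarrow> ('f, 'e) cube \<Rightarrow> ('f, 'e) cube" where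
  "sact \<sigma> v = (case v of (a, e, f, b) \<Rightarrow> (a, \<sigma> e, \<sigma> f, b))"

definition v0 :: "('f::field, 'e::comm_ring_1) cube" where
  "v0 = (1, 0, 0, -1)"

definition stabM :: "('f::field \<Rightarrow> 'e::comm_ring_1) \<Rightarrow> ('f, 'e) cube \<Rightarrow> 'e mat2 set" where
  "stabM \<iota> v = {g \<in> GL20 \<iota>. act \<iota> g v = v}"

text \<open>Stabilizer in \<tilde>M_E(F) = GL_2(E)^0 \<rtimes> S_E(F); the pair (g,\<sigma>) acts as g \<circ> \<sigma>\<close>
definition stabMt :: "('f::field \<Rightarrow> 'e::comm_ring_1) \<Rightarrow> ('f, 'e) cube \<Rightarrow> ('e mat2 \<times> ('e \<Rightarrow> 'e)) set" where
  "stabMt \<iota> v = {(g, \<sigma>). g \<in> GL20 \<iota> \<and> \<sigma> \<in> autE \<iota> \<and> act \<iota> g (sact \<sigma> v) = v}"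

definition QC :: "'e::comm_ring_1 \<times> 'e \<Rightarrow> 'e" where
  "QC v = fst v * snd v"

definition betaC :: "('f::field \<Rightarrow> 'e::comm_ring_1) \<Rightarrow> 'e \<times> 'e \<Rightarrow> 'e \<times> 'e" where
  "betaC \<iota> v = (adj \<iota> (snd v), adj \<iota> (fst v))"

definition escal :: "'e::comm_ring_1 \<Rightarrow> 'e \<times> 'e \<Rightarrow> 'e \<times> 'e" where
  "escal c v = (c * fst v, c * snd v)"

definition vadd :: "'e::comm_ring_1 \<times> 'e \<Rightarrow> 'e \<times> 'e \<Rightarrow> 'e \<times> 'e" where
  "vadd u v = (fst u + fst v, snd u + snd v)"

definition autC :: "('f::field \<Rightarrow> 'e::comm_ring_1) \<Rightarrow> (('e \<times> 'e \<Rightarrow> 'e \<times> 'e) \<times> ('e \<Rightarrow> 'e)) set" where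
  "autC \<iota> = {(\<phi>, \<sigma>). \<sigma> \<in> autE \<iota> \<and> bij \<phi>
      \<and> (\<forall>u v. \<phi> (vadd u v) = vadd (\<phi> u) (\<phi> v)) \<and> (\<forall>c v. \<phi> (escal (\<iota> c) v) = escal (\<iota> c) (\<phi> v))
      \<and> (\<forall>a v. \<phi> (escal a v) = escal (\<sigma> a) (\<phi> v))
      \<and> (\<forall>v. \<sigma> (QC v) = QC (\<phi> v))
      \<and> (\<forall>v. \<phi> (betaC \<iota> v) = betaC \<iota> (\<phi> v))}"

definition autC_mat :: "('f::field \<Rightarrow> 'e::comm_ring_1) \<Rightarrow> ('e mat2 \<times> ('e \<Rightarrow> 'e)) set" where
  "autC_mat \<iota> = {(A, \<sigma>). A \<in> GL2 \<and> ((\<lambda>v. mvec2 A (\<sigma> (fst v), \<sigma> (snd v))), \<sigma>) \<in> autC \<iota>}"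

end

theory Submission
  imports Defs
begin

definition adjg :: "(nat \<Rightarrow> nat \<Rightarrow> 'a::comm_ring_1) \<Rightarrow> nat \<Rightarrow> nat \<Rightarrow> 'a" where
 "adjg m i j = (if i = 0 then (if j = 0 then m 1 1 * m 2 2 - m 1 2 * m 2 1
                              else if j = 1 then m 0 2 * m 2 1 - m 0 1 * m 2 2
                              else m 0 1 * m 1 2 - m 0 2 * m 1 1)
          else if i = 1 then (if j = 0 then m 1 2 * m 2 0 - m 1 0 * m 2 2
                              else if j = 1 then m 0 0 * m 2 2 - m 0 2 * m 2 0
                              else m 0 2 * m 1 0 - m 0 0 * m 1 2)
          else (if j = 0 then m 1 0 * m 2 1 - m 1 1 * m 2 0
                              else if j = 1 then m 0 1 * m 2 0 - m 0 0 * m 2 1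
                              else m 0 0 * m 1 1 - m 0 1 * m 1 0))"

lemma three_cases: "(i::nat) < 3 \<Longrightarrow> i = 0 \<or> i = 1 \<or> i = 2" by auto

lemma alg1: fixes r s p q ap aq d Np Nq :: "'a::comm_ring_1"
  assumes h: "r*ap = s*aq" "p*s - q*r = d" "Np - Nq = d" "p*ap = Np" "q*aq = Nq"
  shows "r*d = aq*d" "s*d = ap*d"
proof -
  have "r*d = r*(p*ap) - r*(q*aq)" unfolding h(3)[symmetric] h(4,5)[symmetric] by (simp add: right_diff_distrib)
  also have "\<dots> = p*(r*ap) - r*(q*aq)" by (simp add: ac_simps)
  also have "\<dots> = p*(s*aq) - r*(q*aq)" using h(1) by simp
  also have "\<dots> = aq*(p*s - q*r)" by (simp add: algebra_simps)
  finally show "r*d = aq*d" using h(2) by (simp add: mult.commute)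
  have "s*d = s*(p*ap) - s*(q*aq)" unfolding h(3)[symmetric] h(4,5)[symmetric] by (simp add: right_diff_distrib)
  also have "\<dots> = s*(p*ap) - q*(s*aq)" by (simp add: ac_simps)
  also have "\<dots> = s*(p*ap) - q*(r*ap)" using h(1) by simp
  also have "\<dots> = ap*(p*s - q*r)" by (simp add: algebra_simps)
  finally show "s*d = ap*d" using h(2) by (simp add: mult.commute)
qed
lemma alg2: fixes r s p q ar as d Nr Ns :: "'a::comm_ring_1"
  assumes h: "p*ar = q*as" "p*s - q*r = d" "Nr - Ns = -d" "r*ar = Nr" "s*as = Ns"
  shows "p*d = as*d" "q*d = ar*d"
proof -
  have d1: "d = Ns - Nr" using h(3) by (metis minus_diff_eq minus_minus)
  have "p*d = p*(s*as) - p*(r*ar)" unfolding d1 h(4,5)[symmetric] by (simp add: right_diff_distrib)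
  also have "\<dots> = p*(s*as) - r*(p*ar)" by (simp add: ac_simps)
  also have "\<dots> = p*(s*as) - r*(q*as)" using h(1) by simp
  also have "\<dots> = as*(p*s - q*r)" by (simp add: algebra_simps)
  finally show "p*d = as*d" using h(2) by (simp add: mult.commute)
  have "q*d = q*(s*as) - q*(r*ar)" unfolding d1 h(4,5)[symmetric] by (simp add: right_diff_distrib)
  also have "\<dots> = s*(q*as) - q*(r*ar)" by (simp add: ac_simps)
  also have "\<dots> = s*(p*ar) - q*(r*ar)" using h(1) by simp
  also have "\<dots> = ar*(p*s - q*r)" by (simp add: algebra_simps)
  finally show "q*d = ar*d" using h(2) by (simp add: mult.commute)
qed

locale cub =
  fixes \<iota> :: "'f::field \<Rightarrow> 'e::comm_ring_1"
  assumes cub: "cubic_alg \<iota>"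
begin

lemma i_add: "\<iota> (c + d) = \<iota> c + \<iota> d" and i_mult: "\<iota> (c * d) = \<iota> c * \<iota> d"
  and i_1: "\<iota> 1 = 1" and i_inj: "inj \<iota>"
  using cub unfolding cubic_alg_def by auto

lemma i_0[simp]: "\<iota> 0 = 0"
  using i_add[of 0 0] by simp

lemma i_neg: "\<iota> (- c) = - \<iota> c"
  using i_add[of c "-c"] minus_unique[of "\<iota> c" "\<iota> (-c)"] by simp

lemma i_diff: "\<iota> (c - d) = \<iota> c - \<iota> d"
  using i_add[of c "-d"] i_neg by simp

lemmas i_simps = i_add i_mult i_1 i_neg i_diff

lemma i_eq_iff[simp]: "\<iota> c = \<iota> d \<longleftrightarrow> c = d"
  using i_inj by (auto dest: injD)

abbreviation b where "b \<equiv> bvec \<iota>"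
abbreviation co where "co \<equiv> coord \<iota>"

lemma basis: "basis3 \<iota> (theB \<iota>)"
  using cub unfolding cubic_alg_def theB_def by (metis someI_ex)

lemma ex1: "\<exists>!c::'f\<times>'f\<times>'f. x = \<iota> (fst c) * b 0 + \<iota> (fst (snd c)) * b 1 + \<iota> (snd (snd c)) * b 2"
  using basis unfolding basis3_def bvec_def by (cases "theB \<iota>") auto

lemma repr: "x = \<iota> (co x 0) * b 0 + \<iota> (co x 1) * b 1 + \<iota> (co x 2) * b 2"
proof -
  let ?P = "\<lambda>c::'f\<times>'f\<times>'f. x = \<iota> (fst c) * b 0 + \<iota> (fst (snd c)) * b 1 + \<iota> (snd (snd c)) * b 2"
  have "?P (THE c. ?P c)" by (rule theI'[OF ex1])
  then show ?thesis unfolding coord_def Let_def by simp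
qed

lemma uniq:
  assumes "x = \<iota> c0 * b 0 + \<iota> c1 * b 1 + \<iota> c2 * b 2"
  shows "co x i = (if i = 0 then c0 else if i = 1 then c1 else c2)"
proof -
  let ?P = "\<lambda>c::'f\<times>'f\<times>'f. x = \<iota> (fst c) * b 0 + \<iota> (fst (snd c)) * b 1 + \<iota> (snd (snd c)) * b 2"
  have "(THE c. ?P c) = (c0, c1, c2)" by (rule the1_equality[OF ex1]) (use assms in simp)
  then show ?thesis unfolding coord_def Let_def by simp
qed

lemma co_lin: "co (\<iota> c * x + \<iota> d * y) i = c * co x i + d * co y i"
proof -
  have "\<iota> c * x + \<iota> d * y = \<iota> (c * co x 0 + d * co y 0) * b 0 + \<iota> (c * co x 1 + d * co y 1) * b 1
     + \<iota> (c * co x 2 + d * co y 2) * b 2"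
    apply (subst repr[of x], subst repr[of y])
    by (simp add: i_simps algebra_simps)
  from uniq[OF this, of i] show ?thesis by (auto simp: coord_def Let_def)
qed

lemma co_add: "co (x + y) i = co x i + co y i"
  using co_lin[of 1 x 1 y i] by (simp add: i_1)
lemma co_smul: "co (\<iota> c * x) i = c * co x i"
  using co_lin[of c x 0 0 i] by simp
lemma co_0[simp]: "co 0 i = 0"
  using co_smul[of 0 0 i] by simp
lemma co_neg: "co (- x) i = - co x i"
  using co_smul[of "-1" x i] by (simp add: i_neg i_1)
lemma co_diff: "co (x - y) i = co x i - co y i"
  using co_add[of x "-y" i] co_neg[of y i] by simp
lemma co_lin3: "co (\<iota> c0 * y0 + \<iota> c1 * y1 + \<iota> c2 * y2) k = c0 * co y0 k + c1 * co y1 k + c2 * co y2 k"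
  by (simp add: co_add co_smul)
lemma co_b: "co (b j) i = (if j = 0 then (if i = 0 then 1 else 0) else if j = 1 then (if i = 1 then 1 else 0)
   else (if i = 0 \<or> i = 1 then 0 else 1))"
proof -
  consider "j = 0" | "j = 1" | "j \<noteq> 0 \<and> j \<noteq> 1" by blast
  then show ?thesis
  proof cases
    case 1
    have "b j = \<iota> 1 * b 0 + \<iota> 0 * b 1 + \<iota> 0 * b 2" using 1 by (simp add: i_1)
    from uniq[OF this, of i] 1 show ?thesis by simp
  next
    case 2
    have "b j = \<iota> 0 * b 0 + \<iota> 1 * b 1 + \<iota> 0 * b 2" using 2 by (simp add: i_1)
    from uniq[OF this, of i] 2 show ?thesis by simp
  next
    case 3
    have "b j = b 2" using 3 by (simp add: bvec_def split: prod.splits)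
    hence "b j = \<iota> 0 * b 0 + \<iota> 0 * b 1 + \<iota> 1 * b 2" by (simp add: i_1)
    from uniq[OF this, of i] 3 show ?thesis by simp
  qed
qed

abbreviation M where "M \<equiv> mm \<iota>"

lemma mm_mult: "M (x * y) i j = M x i 0 * M y 0 j + M x i 1 * M y 1 j + M x i 2 * M y 2 j"
proof -
  have "x * y * b j = \<iota> (M y 0 j) * (x * b 0) + \<iota> (M y 1 j) * (x * b 1) + \<iota> (M y 2 j) * (x * b 2)"
  proof -
    have r: "y * b j = \<iota> (M y 0 j) * b 0 + \<iota> (M y 1 j) * b 1 + \<iota> (M y 2 j) * b 2"
      unfolding mm_def by (rule repr)
    have "x * y * b j = x * (y * b j)" by (simp add: mult.assoc)
    also have "\<dots> = x * (\<iota> (M y 0 j) * b 0 + \<iota> (M y 1 j) * b 1 + \<iota> (M y 2 j) * b 2)"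
      by (subst r) (rule refl)
    finally show ?thesis by (simp add: algebra_simps)
  qed
  note eq = this
  show ?thesis apply (simp only: mm_def[of _ "x*y"] eq co_lin3) by (simp add: mm_def mult.commute)
qed

lemma mm_add: "M (x + y) i j = M x i j + M y i j"
  unfolding mm_def by (simp add: distrib_right co_add)
lemma mm_diff: "M (x - y) i j = M x i j - M y i j"
  unfolding mm_def by (simp add: left_diff_distrib co_diff)
lemma mm_smul: "M (\<iota> c * x) i j = c * M x i j"
  unfolding mm_def by (simp add: mult.assoc co_smul)
lemma mm_iota: "M (\<iota> c) i j = c * co (b j) i"
  using mm_smul[of c 1 i j] unfolding mm_def by simp
lemma mm_0[simp]: "M 0 i j = 0" unfolding mm_def by simp

lemma mm_inj: assumes "\<And>i j. i < 3 \<Longrightarrow> j < 3 \<Longrightarrow> M x i j = M y i j" shows "x = y"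
proof -
  have e: "z = \<iota> (co 1 0) * (\<iota> (M z 0 0) * b 0 + \<iota> (M z 1 0) * b 1 + \<iota> (M z 2 0) * b 2)
     + \<iota> (co 1 1) * (\<iota> (M z 0 1) * b 0 + \<iota> (M z 1 1) * b 1 + \<iota> (M z 2 1) * b 2)
     + \<iota> (co 1 2) * (\<iota> (M z 0 2) * b 0 + \<iota> (M z 1 2) * b 1 + \<iota> (M z 2 2) * b 2)" for z
  proof -
    have "z = z * (\<iota> (co 1 0) * b 0 + \<iota> (co 1 1) * b 1 + \<iota> (co 1 2) * b 2)"
      using repr[of 1] by simp
    also have "\<dots> = \<iota> (co 1 0) * (z * b 0) + \<iota> (co 1 1) * (z * b 1) + \<iota> (co 1 2) * (z * b 2)"
      by (simp add: algebra_simps)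
    also have "\<dots> = \<iota> (co 1 0) * (\<iota> (M z 0 0) * b 0 + \<iota> (M z 1 0) * b 1 + \<iota> (M z 2 0) * b 2)
     + \<iota> (co 1 1) * (\<iota> (M z 0 1) * b 0 + \<iota> (M z 1 1) * b 1 + \<iota> (M z 2 1) * b 2)
     + \<iota> (co 1 2) * (\<iota> (M z 0 2) * b 0 + \<iota> (M z 1 2) * b 1 + \<iota> (M z 2 2) * b 2)"
      unfolding mm_def using repr[of "z * b 0"] repr[of "z * b 1"] repr[of "z * b 2"] by simp
    finally show ?thesis .
  qed
  show ?thesis by (subst e[of x], subst e[of y]) (simp add: assms)
qed

lemma mm_adj: assumes "i < 3" "j < 3" shows "M (adj \<iota> x) i j = adjg (M x) i j"
proof -
  have "M (adj \<iota> x) i j = M (x*x) i j - trc \<iota> x * M x i j + sq2 \<iota> x * co (b j) i"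
    unfolding adj_def by (simp add: mm_add mm_diff mm_smul mm_iota)
  then show ?thesis using three_cases[OF assms(1)] three_cases[OF assms(2)]
    apply (elim disjE)
    by (simp_all add: mm_mult trc_def sq2_def Let_def co_b adjg_def algebra_simps)
qed

lemma mm_1: "M 1 i j = co (b j) i"
  using mm_iota[of 1 i j] by (simp add: i_1)

lemma adj_rt: "x * adj \<iota> x = \<iota> (nrm \<iota> x)"
proof (rule mm_inj)
  fix i j :: nat assume a: "i < 3" "j < 3"
  show "M (x * adj \<iota> x) i j = M (\<iota> (nrm \<iota> x)) i j"
    using three_cases[OF a(1)] three_cases[OF a(2)]
    apply (simp only: mm_mult mm_iota mm_adj)
    apply (elim disjE)
    by (simp_all add: nrm_def Let_def co_b adjg_def mm_adj algebra_simps)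
qed

lemma adj_adj: "adj \<iota> (adj \<iota> x) = \<iota> (nrm \<iota> x) * x"
proof (rule mm_inj)
  fix i j :: nat assume a: "i < 3" "j < 3"
  show "M (adj \<iota> (adj \<iota> x)) i j = M (\<iota> (nrm \<iota> x) * x) i j"
    using three_cases[OF a(1)] three_cases[OF a(2)]
    apply (simp only: mm_smul mm_adj a)
    apply (elim disjE)
    by (simp_all add: nrm_def Let_def adjg_def mm_adj algebra_simps)
qed

lemma nrm_mult: "nrm \<iota> (x * y) = nrm \<iota> x * nrm \<iota> y"
  unfolding nrm_def Let_def mm_mult by (simp add: algebra_simps)

lemma adj_mult: "adj \<iota> (x * y) = adj \<iota> x * adj \<iota> y"
proof -
  have "adj \<iota> (x * y) = adj \<iota> y * adj \<iota> x"
  proof (rule mm_inj)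
    fix i j :: nat assume a: "i < 3" "j < 3"
    show "M (adj \<iota> (x * y)) i j = M (adj \<iota> y * adj \<iota> x) i j"
      using three_cases[OF a(1)] three_cases[OF a(2)]
      apply (simp only: mm_mult mm_adj a)
      apply (elim disjE)
      by (simp_all add: adjg_def mm_mult algebra_simps)
  qed
  then show ?thesis by (simp add: mult.commute)
qed

lemma nrm_0[simp]: "nrm \<iota> 0 = 0" unfolding nrm_def Let_def by simp
lemma trc_0[simp]: "trc \<iota> 0 = 0" unfolding trc_def Let_def by simp
lemma sq2_0[simp]: "sq2 \<iota> 0 = 0" unfolding sq2_def Let_def by simp
lemma adj_0[simp]: "adj \<iota> 0 = 0" unfolding adj_def by simp
lemma nrm_1[simp]: "nrm \<iota> 1 = 1" unfolding nrm_def Let_def mm_1 by (simp add: co_b)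
lemma adj_1[simp]: "adj \<iota> 1 = 1"
proof (rule mm_inj)
  fix i j :: nat assume a: "i < 3" "j < 3"
  show "M (adj \<iota> 1) i j = M 1 i j"
    using three_cases[OF a(1)] three_cases[OF a(2)]
    apply (simp only: mm_adj a)
    apply (elim disjE)
    by (simp_all add: adjg_def mm_1 co_b)
qed

lemma co_mult: "co (x * y) i = M x i 0 * co y 0 + M x i 1 * co y 1 + M x i 2 * co y 2"
proof -
  have r: "y = \<iota> (co y 0) * b 0 + \<iota> (co y 1) * b 1 + \<iota> (co y 2) * b 2" by (rule repr)
  have "x * y = x * (\<iota> (co y 0) * b 0 + \<iota> (co y 1) * b 1 + \<iota> (co y 2) * b 2)"
    by (subst r) (rule refl)
  also have "\<dots> = \<iota> (co y 0) * (x * b 0) + \<iota> (co y 1) * (x * b 1) + \<iota> (co y 2) * (x * b 2)"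
    by (simp add: algebra_simps)
  finally have eq: "x * y = \<iota> (co y 0) * (x * b 0) + \<iota> (co y 1) * (x * b 1) + \<iota> (co y 2) * (x * b 2)" .
  show ?thesis apply (simp only: eq co_lin3) by (simp add: mm_def mult.commute)
qed

lemma co_linmap:
  assumes add: "\<And>u v. f (u + v) = f u + f v" and sm: "\<And>c u. f (\<iota> c * u) = \<iota> c * f u"
  shows "co (f z) k = co z 0 * co (f (b 0)) k + co z 1 * co (f (b 1)) k + co z 2 * co (f (b 2)) k"
proof -
  have r: "z = \<iota> (co z 0) * b 0 + \<iota> (co z 1) * b 1 + \<iota> (co z 2) * b 2" by (rule repr)
  have "f z = f (\<iota> (co z 0) * b 0 + \<iota> (co z 1) * b 1 + \<iota> (co z 2) * b 2)"
    by (subst r) (rule refl)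
  also have "\<dots> = \<iota> (co z 0) * f (b 0) + \<iota> (co z 1) * f (b 1) + \<iota> (co z 2) * f (b 2)"
    by (simp add: add sm)
  finally have eq: "f z = \<iota> (co z 0) * f (b 0) + \<iota> (co z 1) * f (b 1) + \<iota> (co z 2) * f (b 2)" .
  show ?thesis by (simp only: eq co_lin3)
qed

lemma aut_props:
  assumes "\<sigma> \<in> autE \<iota>"
  shows "\<sigma> (u + v) = \<sigma> u + \<sigma> v" "\<sigma> (u * v) = \<sigma> u * \<sigma> v" "\<sigma> (\<iota> c) = \<iota> c"
    "\<sigma> (\<iota> c * u) = \<iota> c * \<sigma> u" "\<sigma> (inv \<sigma> u) = u" "inv \<sigma> (\<sigma> u) = u"
    "\<sigma> 0 = 0" "\<sigma> 1 = 1" "\<sigma> (u - v) = \<sigma> u - \<sigma> v" "\<sigma> u = \<sigma> v \<longleftrightarrow> u = v"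
proof -
  have b: "bij \<sigma>" and a: "\<And>x y. \<sigma> (x + y) = \<sigma> x + \<sigma> y" and m: "\<And>x y. \<sigma> (x * y) = \<sigma> x * \<sigma> y"
    and c: "\<And>c. \<sigma> (\<iota> c) = \<iota> c" using assms unfolding autE_def by auto
  show "\<sigma> (u + v) = \<sigma> u + \<sigma> v" "\<sigma> (u * v) = \<sigma> u * \<sigma> v" "\<sigma> (\<iota> c) = \<iota> c"
    "\<sigma> (\<iota> c * u) = \<iota> c * \<sigma> u" using a m c by auto
  show "\<sigma> (inv \<sigma> u) = u" using b by (simp add: bij_is_surj surj_f_inv_f)
  show "inv \<sigma> (\<sigma> u) = u" using b by (simp add: bij_is_inj)
  show "\<sigma> 0 = 0" using c[of 0] by simp
  show "\<sigma> 1 = 1" using c[of 1] by (simp add: i_1)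
  show "\<sigma> (u - v) = \<sigma> u - \<sigma> v" using a[of "u - v" v] by (simp add: eq_diff_eq)
  show "\<sigma> u = \<sigma> v \<longleftrightarrow> u = v" using b by (auto simp: bij_def inj_eq)
qed

lemma inv_aut_props:
  assumes "\<sigma> \<in> autE \<iota>"
  shows "inv \<sigma> (u + v) = inv \<sigma> u + inv \<sigma> v" "inv \<sigma> (\<iota> c * u) = \<iota> c * inv \<sigma> u"
proof -
  note p = aut_props[OF assms]
  have "\<sigma> (inv \<sigma> u + inv \<sigma> v) = u + v" by (simp add: p)
  then show "inv \<sigma> (u + v) = inv \<sigma> u + inv \<sigma> v" by (metis p(6))
  have "\<sigma> (\<iota> c * inv \<sigma> u) = \<iota> c * u" by (simp add: p)
  then show "inv \<sigma> (\<iota> c * u) = \<iota> c * inv \<sigma> u" by (metis p(6))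
qed

lemma trc_aut:
  assumes s: "\<sigma> \<in> autE \<iota>"
  shows "trc \<iota> (\<sigma> x) = trc \<iota> x"
proof -
  note p = aut_props[OF s] and q = inv_aut_props[OF s]
  define P where "P k i = co (\<sigma> (b i)) k" for k i
  define Q where "Q k i = co (inv \<sigma> (b i)) k" for k i
  define R where "R k l = P 0 l * Q k 0 + P 1 l * Q k 1 + P 2 l * Q k 2" for k l
  have coS: "co (\<sigma> z) k = co z 0 * P k 0 + co z 1 * P k 1 + co z 2 * P k 2" for z k
    unfolding P_def by (rule co_linmap) (simp_all add: p)
  have coT: "co (inv \<sigma> z) k = co z 0 * Q k 0 + co z 1 * Q k 1 + co z 2 * Q k 2" for z k
    unfolding Q_def by (rule co_linmap) (simp_all add: q)
  have R: "R k l = co (b l) k" for k l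
  proof -
    have "co (b l) k = co (inv \<sigma> (\<sigma> (b l))) k" by (simp add: p)
    also have "\<dots> = R k l" unfolding coT R_def P_def by (simp add: algebra_simps)
    finally show ?thesis by simp
  qed
  have Mm: "M (\<sigma> x) i j = (M x 0 0 * Q 0 j + M x 0 1 * Q 1 j + M x 0 2 * Q 2 j) * P i 0
     + (M x 1 0 * Q 0 j + M x 1 1 * Q 1 j + M x 1 2 * Q 2 j) * P i 1
     + (M x 2 0 * Q 0 j + M x 2 1 * Q 1 j + M x 2 2 * Q 2 j) * P i 2" for i j
  proof -
    have "\<sigma> x * b j = \<sigma> (x * inv \<sigma> (b j))" by (simp add: p)
    then have e: "M (\<sigma> x) i j = co (\<sigma> (x * inv \<sigma> (b j))) i" unfolding mm_def by simp
    show ?thesis unfolding e coS co_mult Q_def by simp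
  qed
  have "trc \<iota> (\<sigma> x) = M x 0 0 * R 0 0 + M x 0 1 * R 1 0 + M x 0 2 * R 2 0
     + M x 1 0 * R 0 1 + M x 1 1 * R 1 1 + M x 1 2 * R 2 1
     + M x 2 0 * R 0 2 + M x 2 1 * R 1 2 + M x 2 2 * R 2 2"
    unfolding trc_def Let_def Mm R_def by (simp add: algebra_simps)
  also have "\<dots> = trc \<iota> x" unfolding R co_b trc_def Let_def by simp
  finally show ?thesis .
qed

lemma sq2_trc: "sq2 \<iota> x * 2 = trc \<iota> x * trc \<iota> x - trc \<iota> (x * x)"
  unfolding sq2_def trc_def Let_def mm_mult by (simp add: algebra_simps)

lemma adj_aut:
  assumes s: "\<sigma> \<in> autE \<iota>" and two: "(2::'f) \<noteq> 0"
  shows "\<sigma> (adj \<iota> x) = adj \<iota> (\<sigma> x)"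
proof -
  note p = aut_props[OF s]
  have t: "trc \<iota> (\<sigma> x) = trc \<iota> x" by (rule trc_aut[OF s])
  have "sq2 \<iota> (\<sigma> x) * 2 = sq2 \<iota> x * 2"
    unfolding sq2_trc t using trc_aut[OF s, of "x*x"] by (simp add: p)
  with two have sq: "sq2 \<iota> (\<sigma> x) = sq2 \<iota> x" by simp
  show ?thesis unfolding adj_def by (simp add: p t sq)
qed

lemma detF_eq: "det2 g = \<iota> D \<Longrightarrow> detF \<iota> g = D"
  unfolding detF_def by auto

lemma cr_0: "cr \<iota> 0 x = 0" unfolding cr_def by simp

lemma act_v0:
  assumes "det2 (p, q, r, s) = \<iota> D"
  shows "act \<iota> (p, q, r, s) (1, 0, 0, -1) = (inverse D * (nrm \<iota> p - nrm \<iota> q),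
     \<iota> (inverse D) * (r * adj \<iota> p - s * adj \<iota> q), \<iota> (inverse D) * (p * adj \<iota> r - q * adj \<iota> s),
     inverse D * (nrm \<iota> r - nrm \<iota> s))"
  using detF_eq[OF assms] unfolding act_def v0_def Let_def
  by (simp add: cr_0 i_neg i_1 algebra_simps)

lemma iinv: "D \<noteq> 0 \<Longrightarrow> \<iota> D * \<iota> (inverse D) = 1"
  by (simp add: i_mult[symmetric] i_1)

lemma fix_scal: assumes "x = \<iota> c * x" "x \<noteq> 0" shows "c = 1"
proof (rule ccontr)
  assume "c \<noteq> 1"
  then have "\<iota> (inverse (c - 1)) * (\<iota> (c - 1) * x) = x"
    by (simp add: mult.assoc[symmetric] i_mult[symmetric] i_1)
  moreover have "\<iota> (c - 1) * x = 0" using assms(1) by (simp add: i_diff i_1 algebra_simps)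
  ultimately show False using assms(2) by simp
qed

definition S1 where "S1 = {(\<alpha>, 0, 0, \<alpha>') | \<alpha> \<alpha>'. \<alpha> \<in> E1 \<iota> \<and> \<alpha> * \<alpha>' = 1}"
definition S2 where "S2 = {mmul2 (\<alpha>, 0, 0, \<alpha>') wmat | \<alpha> \<alpha>'. \<alpha> \<in> E1 \<iota> \<and> \<alpha> * \<alpha>' = 1}"

lemma mmw: "mmul2 (\<alpha>, 0, 0, \<alpha>') wmat = (0, \<alpha>, \<alpha>', 0)"
  unfolding mmul2_def wmat_def by simp

lemma inv_adj: assumes "nrm \<iota> \<alpha> = 1" "\<alpha> * \<alpha>' = 1" shows "\<alpha>' = adj \<iota> \<alpha>" "nrm \<iota> \<alpha>' = 1"
proof -
  have "\<alpha> * adj \<iota> \<alpha> = 1" using adj_rt[of \<alpha>] assms by (simp add: i_1)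
  then show "\<alpha>' = adj \<iota> \<alpha>" using assms(2) by (metis mult.assoc mult.commute mult_1_right)
  have "nrm \<iota> \<alpha> * nrm \<iota> \<alpha>' = 1" using nrm_mult[of \<alpha> \<alpha>'] assms by simp
  then show "nrm \<iota> \<alpha>' = 1" using assms by simp
qed

lemma stab_sub: assumes "g \<in> stabM \<iota> v0" shows "g \<in> S1 \<union> S2"
proof -
  obtain p q r s where g: "g = (p, q, r, s)" by (cases g) auto
  from assms obtain D where D: "D \<noteq> 0" "det2 g = \<iota> D" and a: "act \<iota> g v0 = v0"
    unfolding stabM_def GL20_def by auto
  let ?d = "\<iota> D"
  have det: "p * s - q * r = ?d" using D g by (simp add: det2_def)
  have a': "act \<iota> (p, q, r, s) (1, 0, 0, -1) = (1, 0, 0, -1)" using a g by (simp add: v0_def)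
  note a' = a'[unfolded act_v0[OF D(2)[unfolded g]]]
  have e1: "nrm \<iota> p - nrm \<iota> q = D" using a' D by (simp add: field_simps)
  have e4: "nrm \<iota> r - nrm \<iota> s = - D" using a' D by (simp add: field_simps)
  have z: "x = 0" if "\<iota> (inverse D) * x = 0" for x
    using that iinv[OF D(1)] by (metis mult.assoc mult_1 mult_zero_right)
  have e2: "r * adj \<iota> p = s * adj \<iota> q" using a' z[of "r * adj \<iota> p - s * adj \<iota> q"] by simp
  have e3: "p * adj \<iota> r = q * adj \<iota> s" using a' z[of "p * adj \<iota> r - q * adj \<iota> s"] by simp
  have c: "x = y" if "x * ?d = y * ?d" for x y
    using that iinv[OF D(1)] by (metis mult.assoc mult.commute mult_1_right)
  have n1: "\<iota> (nrm \<iota> p) - \<iota> (nrm \<iota> q) = ?d" using e1 by (simp add: i_diff[symmetric])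
  have n4: "\<iota> (nrm \<iota> r) - \<iota> (nrm \<iota> s) = - ?d" using e4 by (simp add: i_diff[symmetric] i_neg)
  note ap = adj_rt[of p] and aq = adj_rt[of q] and ar = adj_rt[of r] and as = adj_rt[of s]
  note A1 = alg1[OF e2 det n1 ap aq] and A2 = alg2[OF e3 det n4 ar as]
  have rq: "r = adj \<iota> q" by (rule c[OF A1(1)])
  have sp: "s = adj \<iota> p" by (rule c[OF A1(2)])
  have ps: "p = adj \<iota> s" by (rule c[OF A2(1)])
  have qr: "q = adj \<iota> r" by (rule c[OF A2(2)])
  have pp: "p = \<iota> (nrm \<iota> p) * p" using ps sp adj_adj by simp
  have qq: "q = \<iota> (nrm \<iota> q) * q" using qr rq adj_adj by simp
  show ?thesis
  proof (cases "p = 0")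
    case True
    then have "q \<noteq> 0" using e1 D by auto
    then have nq: "nrm \<iota> q = 1" using fix_scal qq by blast
    have "g = mmul2 (q, 0, 0, adj \<iota> q) wmat" using g True sp rq by (simp add: mmw)
    moreover have "q * adj \<iota> q = 1" using aq nq by (simp add: i_1)
    ultimately have "g \<in> S2" unfolding S2_def E1_def using nq by blast
    then show ?thesis by simp
  next
    case False
    then have np: "nrm \<iota> p = 1" using fix_scal pp by blast
    have "q = 0"
    proof (rule ccontr)
      assume "q \<noteq> 0"
      then have "nrm \<iota> q = 1" using fix_scal qq by blast
      then show False using np e1 D by simp
    qed
    then have "g = (p, 0, 0, adj \<iota> p)" using g sp rq by simp
    moreover have "p * adj \<iota> p = 1" using ap np by (simp add: i_1)
    ultimately have "g \<in> S1" unfolding S1_def E1_def using np by blast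
    then show ?thesis by simp
  qed
qed

lemma stab_sup: assumes "g \<in> S1 \<union> S2" shows "g \<in> stabM \<iota> v0"
  using assms
proof
  assume "g \<in> S1"
  then obtain \<alpha> \<alpha>' where g: "g = (\<alpha>, 0, 0, \<alpha>')" and n: "nrm \<iota> \<alpha> = 1" and m: "\<alpha> * \<alpha>' = 1"
    unfolding S1_def E1_def by blast
  have d: "det2 (\<alpha>, 0, 0, \<alpha>') = \<iota> 1" using m by (simp add: det2_def i_1)
  have n': "nrm \<iota> \<alpha>' = 1" using inv_adj[OF n m] by simp
  show ?thesis unfolding stabM_def GL20_def using d
    by (auto simp: g act_v0[OF d] n n' v0_def intro!: exI[of _ 1])
next
  assume "g \<in> S2"
  then obtain \<alpha> \<alpha>' where g: "g = (0, \<alpha>, \<alpha>', 0)" and n: "nrm \<iota> \<alpha> = 1" and m: "\<alpha> * \<alpha>' = 1"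
    unfolding S2_def E1_def mmw by blast
  have d: "det2 (0, \<alpha>, \<alpha>', 0) = \<iota> (-1)" using m by (simp add: det2_def i_1 i_neg)
  have n': "nrm \<iota> \<alpha>' = 1" using inv_adj[OF n m] by simp
  show ?thesis unfolding stabM_def GL20_def using d
    by (auto simp: g act_v0[OF d] n n' v0_def intro!: exI[of _ "-1"])
qed

lemma stab_eq: "stabM \<iota> v0 = S1 \<union> S2"
  using stab_sub stab_sup by blast

lemma autC_sup:
  assumes two: "(2::'f) \<noteq> 0" and A: "A \<in> S1 \<union> S2" and s: "\<sigma> \<in> autE \<iota>"
  shows "(A, \<sigma>) \<in> autC_mat \<iota>"
  using A
proof
  note p = aut_props[OF s]
  assume "A \<in> S1"
  then obtain \<alpha> \<alpha>' where g: "A = (\<alpha>, 0, 0, \<alpha>')" and n: "nrm \<iota> \<alpha> = 1" and m: "\<alpha> * \<alpha>' = 1"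
    unfolding S1_def E1_def by blast
  have a1: "adj \<iota> \<alpha> = \<alpha>'" using inv_adj[OF n m] by simp
  have a2: "adj \<iota> \<alpha>' = \<alpha>" using adj_adj[of \<alpha>] a1 n by (simp add: i_1)
  have m': "\<alpha>' * \<alpha> = 1" using m by (simp add: mult.commute)
  have m2: "\<alpha>' * (\<alpha> * z) = z" "\<alpha> * (\<alpha>' * z) = z" for z
    using m m' by (simp_all add: mult.assoc[symmetric])
  let ?phi = "\<lambda>v. mvec2 A (\<sigma> (fst v), \<sigma> (snd v))"
  have phi: "?phi = (\<lambda>(x, y). (\<alpha> * \<sigma> x, \<alpha>' * \<sigma> y))" by (auto simp: g mvec2_def)
  have "bij ?phi"
  proof (rule o_bij)
    show "?phi \<circ> (\<lambda>(u, v). (inv \<sigma> (\<alpha>' * u), inv \<sigma> (\<alpha> * v))) = id"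
      unfolding phi by (auto simp: fun_eq_iff p mult.assoc[symmetric] m m')
    show "(\<lambda>(u, v). (inv \<sigma> (\<alpha>' * u), inv \<sigma> (\<alpha> * v))) \<circ> ?phi = id"
      unfolding phi by (auto simp: fun_eq_iff p mult.assoc[symmetric] m m')
  qed
  moreover have "A \<in> GL2" unfolding GL2_def g det2_def using m by auto
  ultimately show ?thesis unfolding autC_mat_def autC_def using s
    by (auto simp: g mvec2_def vadd_def escal_def QC_def betaC_def p adj_mult adj_aut[OF s two] a1 a2
       algebra_simps m m2)
next
  note p = aut_props[OF s]
  assume "A \<in> S2"
  then obtain \<alpha> \<alpha>' where g: "A = (0, \<alpha>, \<alpha>', 0)" and n: "nrm \<iota> \<alpha> = 1" and m: "\<alpha> * \<alpha>' = 1"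
    unfolding S2_def E1_def mmw by blast
  have a1: "adj \<iota> \<alpha> = \<alpha>'" using inv_adj[OF n m] by simp
  have a2: "adj \<iota> \<alpha>' = \<alpha>" using adj_adj[of \<alpha>] a1 n by (simp add: i_1)
  have m': "\<alpha>' * \<alpha> = 1" using m by (simp add: mult.commute)
  have m2: "\<alpha>' * (\<alpha> * z) = z" "\<alpha> * (\<alpha>' * z) = z" for z
    using m m' by (simp_all add: mult.assoc[symmetric])
  let ?phi = "\<lambda>v. mvec2 A (\<sigma> (fst v), \<sigma> (snd v))"
  have phi: "?phi = (\<lambda>(x, y). (\<alpha> * \<sigma> y, \<alpha>' * \<sigma> x))" by (auto simp: g mvec2_def)
  have "bij ?phi"
  proof (rule o_bij)
    show "?phi \<circ> (\<lambda>(u, v). (inv \<sigma> (\<alpha> * v), inv \<sigma> (\<alpha>' * u))) = id"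
      unfolding phi by (auto simp: fun_eq_iff p mult.assoc[symmetric] m m')
    show "(\<lambda>(u, v). (inv \<sigma> (\<alpha> * v), inv \<sigma> (\<alpha>' * u))) \<circ> ?phi = id"
      unfolding phi by (auto simp: fun_eq_iff p mult.assoc[symmetric] m m')
  qed
  moreover have "A \<in> GL2" unfolding GL2_def g det2_def using m by (auto intro!: exI[of _ "-1"])
  ultimately show ?thesis unfolding autC_mat_def autC_def using s
    by (auto simp: g mvec2_def vadd_def escal_def QC_def betaC_def p adj_mult adj_aut[OF s two] a1 a2
       algebra_simps m m2)
qed

lemma autC_sub:
  assumes "(A, \<sigma>) \<in> autC_mat \<iota>"
  shows "A \<in> S1 \<union> S2 \<and> \<sigma> \<in> autE \<iota>"
proof -
  obtain p q r s where g: "A = (p, q, r, s)" by (cases A) auto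
  let ?phi = "\<lambda>v. mvec2 A (\<sigma> (fst v), \<sigma> (snd v))"
  from assms have s: "\<sigma> \<in> autE \<iota>" and Q: "\<And>v. \<sigma> (QC v) = QC (?phi v)"
    and B: "\<And>v. ?phi (betaC \<iota> v) = betaC \<iota> (?phi v)"
    unfolding autC_mat_def autC_def by auto
  note pr = aut_props[OF s]
  have q1: "p * r = 0" using Q[of "(1,0)"] by (simp add: QC_def pr g mvec2_def)
  have q2: "q * s = 0" using Q[of "(0,1)"] by (simp add: QC_def pr g mvec2_def)
  have q3: "(p + q) * (r + s) = 1" using Q[of "(1,1)"] by (simp add: QC_def pr g mvec2_def)
  have b1: "p = adj \<iota> s" "r = adj \<iota> q" using B[of "(0,1)"] by (simp_all add: betaC_def pr g mvec2_def)
  have b2: "q = adj \<iota> r" "s = adj \<iota> p" using B[of "(1,0)"] by (simp_all add: betaC_def pr g mvec2_def)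
  have pp: "p = \<iota> (nrm \<iota> p) * p" using adj_adj[of p] b1(1) b2(2) by metis
  have qq: "q = \<iota> (nrm \<iota> q) * q" using adj_adj[of q] b1(2) b2(1) by metis
  have "p * s + q * r = 1" using q1 q2 q3 by (simp add: algebra_simps)
  then have "p * adj \<iota> p + q * adj \<iota> q = 1" using b1(2) b2(2) by simp
  then have "\<iota> (nrm \<iota> p + nrm \<iota> q) = 1" using adj_rt[of p] adj_rt[of q] by (simp add: i_add)
  then have sum: "nrm \<iota> p + nrm \<iota> q = 1" using i_1 by (metis i_eq_iff)
  have "A \<in> S1 \<union> S2"
  proof (cases "p = 0")
    case True
    then have nq: "nrm \<iota> q = 1" using sum by simp
    have "A = mmul2 (q, 0, 0, adj \<iota> q) wmat" using g True b1(2) b2(2) by (simp add: mmw)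
    moreover have "q * adj \<iota> q = 1" using adj_rt[of q] nq by (simp add: i_1)
    ultimately have "A \<in> S2" unfolding S2_def E1_def using nq by blast
    then show ?thesis by simp
  next
    case False
    then have np: "nrm \<iota> p = 1" using fix_scal pp by blast
    have "q = 0"
    proof (rule ccontr)
      assume "q \<noteq> 0"
      then have "nrm \<iota> q = 1" using fix_scal qq by blast
      then have "(1::'f) + 1 = 1" using np sum by simp
      then show False by (metis add_cancel_right_right one_neq_zero)
    qed
    then have "A = (p, 0, 0, adj \<iota> p)" using g b1(2) b2(2) by simp
    moreover have "p * adj \<iota> p = 1" using adj_rt[of p] np by (simp add: i_1)
    ultimately have "A \<in> S1" unfolding S1_def E1_def using np by blast
    then show ?thesis by simp
  qed
  with s show ?thesis by simp
qed

end

theorem proposition7p1: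
  fixes \<iota> :: "'f::field \<Rightarrow> 'e::comm_ring_1"
  assumes "(2::'f) \<noteq> 0" and "(3::'f) \<noteq> 0"
    and "etale_cubic \<iota>"
  shows "(stabM \<iota> v0 =
           {(\<alpha>, 0, 0, \<alpha>') | \<alpha> \<alpha>'. \<alpha> \<in> E1 \<iota> \<and> \<alpha> * \<alpha>' = 1}
         \<union> {mmul2 (\<alpha>, 0, 0, \<alpha>') wmat | \<alpha> \<alpha>'. \<alpha> \<in> E1 \<iota> \<and> \<alpha> * \<alpha>' = 1})
    \<and> (stabMt \<iota> v0 = stabM \<iota> v0 \<times> autE \<iota>)
    \<and> (stabMt \<iota> v0 = autC_mat \<iota>)"
proof -
  interpret cub \<iota> using assms(3) by unfold_locales (simp add: etale_cubic_def)
  have st: "stabM \<iota> v0 = S1 \<union> S2" by (rule stab_eq)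
  have sv: "sact \<sigma> v0 = v0" if "\<sigma> \<in> autE \<iota>" for \<sigma>
    using aut_props[OF that] by (simp add: sact_def v0_def)
  have t2: "stabMt \<iota> v0 = stabM \<iota> v0 \<times> autE \<iota>"
    unfolding stabMt_def stabM_def by (auto simp: sv)
  have t3: "stabMt \<iota> v0 = autC_mat \<iota>"
  proof (rule set_eqI)
    fix x :: "'e mat2 \<times> ('e \<Rightarrow> 'e)"
    obtain A \<sigma> where x: "x = (A, \<sigma>)" by (cases x) auto
    show "x \<in> stabMt \<iota> v0 \<longleftrightarrow> x \<in> autC_mat \<iota>"
      unfolding x t2 st using autC_sup[OF assms(1)] autC_sub by blast
  qed
  show ?thesis using st t2 t3 unfolding S1_def S2_def by blast
qed

end
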